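(* Let $K\subseteq\mathbb{M}_\xi\Sigma$ be a language with a syntactic algebra. A language $L\subseteq\mathbb{M}_\zeta\Gamma$ over an alphabet $\Gamma$ is recognised by some morphism of $\mathbb{M}$-algebras $\mathbb{M}\Gamma\to\mathrm{Syn}(K)$ if, and only if, $$L=\varphi^{-1}\Bigl[\bigcup_{i<m}\bigcap_{k<n_i}p_{ik}^{-1}[K]\Bigr]$$ for some morphism of $\mathbb{M}$-algebras $\varphi:\mathbb{M}\Gamma\to\mathbb{M}\Sigma$, numbers $m,n_i<\omega$, and contexts $p_{ik}\in\mathbb{M}_\xi(\Sigma+\{\Box\})$ with hole of sort $\zeta$.
   Context: Fix a set $\Xi$ of sorts. $\mathsf{Pos}^\Xi$: $\Xi$-sorted families of partial orders ("sets") with sort-wise order-preserving maps. $\mathbb{M}$ is a monad on $\mathsf{Pos}^\Xi$ (with $\mathrm{flat}$, $\mathrm{sing}$) preserving injective, surjective, bijective functions and preimages, and using the standard ordering (the order on $\mathbb{M}A$ is $\{(\mathbb{M}p(u),\mathbb{M}q(u)):u\in\mathbb{M}R\}$, $R$ the order of $A$). $\mathbb{M}$-algebras $\langle A,\pi\rangle$ satisfy $\pi\circ\mathbb{M}\pi=\pi\circ\mathrm{flat}$, $\pi\circ\mathrm{sing}=\mathrm{id}$; morphisms commute with products; $\mathbb{M}\Sigma$ with $\mathrm{flat}$ is the free algebra. An alphabet is a finite unordered set; a language is $K\subseteq\mathbb{M}_\xi\Sigma$; a morphism $f:\mathbb{M}\Sigma\to\mathfrak{A}$ recognises $K$ if $K=f^{-1}[P]$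 for some upwards closed $P\subseteq A_\xi$. A context with hole of sort $\zeta$ is $p\in\mathbb{M}(\Sigma+\{\Box\})$, $\Box$ a new symbol of sort $\zeta$; $p[s]$ ($s\in\mathbb{M}_\zeta\Sigma$) is the image of $p$ under the algebra morphism $\mathbb{M}(\Sigma+\{\Box\})\to\mathbb{M}\Sigma$ extending $\Box\mapsto s$, $c\mapsto\mathrm{sing}(c)$; $p^{-1}[K]=\{s:p[s]\in K\}$. Syntactic congruence: $s\preceq_K t$ ($s,t$ of the same sort $\zeta$) iff $p[s]\in K\Rightarrow p[t]\in K$ for all contexts $p\in\mathbb{M}_\xi(\Sigma+\{\Box\})$ with hole of sort $\zeta$. A preorder containing the order is a congruence ordering if $\mathbb{M}q(s)\leq\mathbb{M}q(t)$ implies $\pi(s)\sqsubseteq\pi(t)$ for the quotient map $q$ onto the ordered set of classes; then the quotient is an algebra with $\pi\circ\mathbb{M}q=q\circ\pi$. $K$ has a syntactic algebra if $\preceq_K$ is a congruence ordering with sort-wise finite quotient; $\mathrm{Syn}(K)=\mathbb{M}\Sigma/{\preceq_K}$, $\mathrm{syn}_K$ the quotient morphism. *)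

theory Defs
  imports Main
begin

text \<open>A \<Xi>-sorted ordered set is modelled inside a universe type 'u:
  a carrier per sort together with an order relation per sort.
  Sorted functions are maps 's => 'u => 'u (only their values on the carrier matter).\<close>

type_synonym ('s,'u) pos = "('s \<Rightarrow> 'u set) \<times> ('s \<Rightarrow> 'u \<Rightarrow> 'u \<Rightarrow> bool)"
type_synonym ('s,'u) smap = "'s \<Rightarrow> 'u \<Rightarrow> 'u"

definition carr :: "('s,'u) pos \<Rightarrow> 's \<Rightarrow> 'u set" where
  "carr A = fst A"

definition leq :: "('s,'u) pos \<Rightarrow> 's \<Rightarrow> 'u \<Rightarrow> 'u \<Rightarrow> bool" where
  "leq A = snd A"

definition is_pos :: "('s,'u) pos \<Rightarrow> bool" where
  "is_pos A \<longleftrightarrow> (\<forall>s.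
      (\<forall>x\<in>carr A s. leq A s x x) \<and>
      (\<forall>x\<in>carr A s. \<forall>y\<in>carr A s. leq A s x y \<and> leq A s y x \<longrightarrow> x = y) \<and>
      (\<forall>x\<in>carr A s. \<forall>y\<in>carr A s. \<forall>z\<in>carr A s. leq A s x y \<and> leq A s y z \<longrightarrow> leq A s x z))"

definition is_mor :: "('s,'u) pos \<Rightarrow> ('s,'u) pos \<Rightarrow> ('s,'u) smap \<Rightarrow> bool" where
  "is_mor A B f \<longleftrightarrow> (\<forall>s.
      (\<forall>x\<in>carr A s. f s x \<in> carr B s) \<and>
      (\<forall>x\<in>carr A s. \<forall>y\<in>carr A s. leq A s x y \<longrightarrow> leq B s (f s x) (f s y)))"

definition agree :: "('s,'u) pos \<Rightarrow> ('s,'u) smap \<Rightarrow> ('s,'u) smap \<Rightarrow> bool" where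
  "agree A f g \<longleftrightarrow> (\<forall>s. \<forall>x\<in>carr A s. f s x = g s x)"

definition subpos :: "('s,'u) pos \<Rightarrow> ('s \<Rightarrow> 'u set) \<Rightarrow> ('s,'u) pos" where
  "subpos B C = (C, leq B)"

definition disc :: "('s \<Rightarrow> 'u set) \<Rightarrow> ('s,'u) pos" where
  "disc S = (S, \<lambda>s x y. x = y)"

definition alphabet :: "('s \<Rightarrow> 'u set) \<Rightarrow> bool" where
  "alphabet S \<longleftrightarrow> finite {(s, x). x \<in> S s}"

text \<open>The universe comes with codings of pairs (pr) and of binary coproducts (inl, inr);
  the monad is given by its action on objects (the underlying sorted sets; the order is the
  standard ordering, see Mobj), on maps, and by sing and flat.\<close>

record ('s,'u) mnd =
  pr :: "'u \<Rightarrow> 'u \<Rightarrow> 'u"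
  inl :: "'u \<Rightarrow> 'u"
  inr :: "'u \<Rightarrow> 'u"
  Mset :: "('s,'u) pos \<Rightarrow> 's \<Rightarrow> 'u set"
  Mmap :: "('s,'u) pos \<Rightarrow> ('s,'u) smap \<Rightarrow> ('s,'u) smap"
  sing :: "('s,'u) pos \<Rightarrow> ('s,'u) smap"
  flat :: "('s,'u) pos \<Rightarrow> ('s,'u) smap"

definition p1 :: "('s,'u) mnd \<Rightarrow> 'u \<Rightarrow> 'u" where
  "p1 T z = (THE x. \<exists>y. z = pr T x y)"

definition p2 :: "('s,'u) mnd \<Rightarrow> 'u \<Rightarrow> 'u" where
  "p2 T z = (THE y. \<exists>x. z = pr T x y)"

text \<open>The order R of A, viewed as an ordered set (componentwise order).\<close>
definition relobj :: "('s,'u) mnd \<Rightarrow> ('s,'u) pos \<Rightarrow> ('s,'u) pos" where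
  "relobj T A = (\<lambda>s. {pr T x y | x y. x \<in> carr A s \<and> y \<in> carr A s \<and> leq A s x y},
                 \<lambda>s z w. leq A s (p1 T z) (p1 T w) \<and> leq A s (p2 T z) (p2 T w))"

definition Mobj :: "('s,'u) mnd \<Rightarrow> ('s,'u) pos \<Rightarrow> ('s,'u) pos" where
  "Mobj T A = (Mset T A,
     \<lambda>s a b. \<exists>u\<in>Mset T (relobj T A) s.
        Mmap T (relobj T A) (\<lambda>_. p1 T) s u = a \<and> Mmap T (relobj T A) (\<lambda>_. p2 T) s u = b)"

definition monad_ok :: "('s,'u) mnd \<Rightarrow> bool" where
  "monad_ok T \<longleftrightarrow>
    (\<forall>a b c d. pr T a b = pr T c d \<longrightarrow> a = c \<and> b = d) \<and>
    inj (inl T) \<and> inj (inr T) \<and> (\<forall>x y. inl T x \<noteq> inr T y) \<and>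
    \<comment> \<open>M is an endofunctor of Pos^Xi (with the standard ordering)\<close>
    (\<forall>A. is_pos A \<longrightarrow> is_pos (Mobj T A)) \<and>
    (\<forall>A B f. is_pos A \<and> is_pos B \<and> is_mor A B f \<longrightarrow> is_mor (Mobj T A) (Mobj T B) (Mmap T A f)) \<and>
    (\<forall>A B f g. is_pos A \<and> is_pos B \<and> is_mor A B f \<and> agree A f g \<longrightarrow>
        agree (Mobj T A) (Mmap T A f) (Mmap T A g)) \<and>
    (\<forall>A. is_pos A \<longrightarrow> agree (Mobj T A) (Mmap T A (\<lambda>s x. x)) (\<lambda>s x. x)) \<and>
    (\<forall>A B C f g. is_pos A \<and> is_pos B \<and> is_pos C \<and> is_mor A B f \<and> is_mor B C g \<longrightarrow>
        agree (Mobj T A) (Mmap T A (\<lambda>s x. g s (f s x))) (\<lambda>s u. Mmap T B g s (Mmap T A f s u))) \<and>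
    \<comment> \<open>sing and flat are natural transformations\<close>
    (\<forall>A. is_pos A \<longrightarrow> is_mor A (Mobj T A) (sing T A)) \<and>
    (\<forall>A. is_pos A \<longrightarrow> is_mor (Mobj T (Mobj T A)) (Mobj T A) (flat T A)) \<and>
    (\<forall>A B f. is_pos A \<and> is_pos B \<and> is_mor A B f \<longrightarrow>
        agree A (\<lambda>s x. Mmap T A f s (sing T A s x)) (\<lambda>s x. sing T B s (f s x))) \<and>
    (\<forall>A B f. is_pos A \<and> is_pos B \<and> is_mor A B f \<longrightarrow>
        agree (Mobj T (Mobj T A)) (\<lambda>s u. Mmap T A f s (flat T A s u))
              (\<lambda>s u. flat T B s (Mmap T (Mobj T A) (Mmap T A f) s u))) \<and>
    \<comment> \<open>monad laws\<close>
    (\<forall>A. is_pos A \<longrightarrow> agree (Mobj T A) (\<lambda>s u. flat T A s (sing T (Mobj T A) s u)) (\<lambda>s u. u)) \<and>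
    (\<forall>A. is_pos A \<longrightarrow> agree (Mobj T A) (\<lambda>s u. flat T A s (Mmap T A (sing T A) s u)) (\<lambda>s u. u)) \<and>
    (\<forall>A. is_pos A \<longrightarrow> agree (Mobj T (Mobj T (Mobj T A)))
        (\<lambda>s u. flat T A s (flat T (Mobj T A) s u))
        (\<lambda>s u. flat T A s (Mmap T (Mobj T (Mobj T A)) (flat T A) s u))) \<and>
    \<comment> \<open>preservation of injective, surjective, bijective functions\<close>
    (\<forall>A B f. is_pos A \<and> is_pos B \<and> is_mor A B f \<and> (\<forall>s. inj_on (f s) (carr A s)) \<longrightarrow>
        (\<forall>s. inj_on (Mmap T A f s) (Mset T A s))) \<and>
    (\<forall>A B f. is_pos A \<and> is_pos B \<and> is_mor A B f \<and> (\<forall>s. f s ` carr A s = carr B s) \<longrightarrow>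
        (\<forall>s. Mmap T A f s ` Mset T A s = Mset T B s)) \<and>
    (\<forall>A B f. is_pos A \<and> is_pos B \<and> is_mor A B f \<and> (\<forall>s. bij_betw (f s) (carr A s) (carr B s)) \<longrightarrow>
        (\<forall>s. bij_betw (Mmap T A f s) (Mset T A s) (Mset T B s))) \<and>
    \<comment> \<open>preservation of preimages (M of the inclusion of f^-1[C] is (Mf)^-1 of M of the inclusion of C)\<close>
    (\<forall>A B f C. is_pos A \<and> is_pos B \<and> is_mor A B f \<and> (\<forall>s. C s \<subseteq> carr B s) \<longrightarrow>
        (\<forall>s. Mmap T (subpos A (\<lambda>s. {x \<in> carr A s. f s x \<in> C s})) (\<lambda>s x. x) s `
               Mset T (subpos A (\<lambda>s. {x \<in> carr A s. f s x \<in> C s})) s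
             = {u \<in> Mset T A s. Mmap T A f s u \<in>
                   Mmap T (subpos B C) (\<lambda>s x. x) s ` Mset T (subpos B C) s}))"

type_synonym ('s,'u) alg = "('s,'u) pos \<times> ('s,'u) smap"

definition is_alg :: "('s,'u) mnd \<Rightarrow> ('s,'u) alg \<Rightarrow> bool" where
  "is_alg T Al \<longleftrightarrow> (let A = fst Al; \<pi> = snd Al in
     is_pos A \<and> is_mor (Mobj T A) A \<pi> \<and>
     agree (Mobj T (Mobj T A)) (\<lambda>s u. \<pi> s (Mmap T (Mobj T A) \<pi> s u)) (\<lambda>s u. \<pi> s (flat T A s u)) \<and>
     agree A (\<lambda>s x. \<pi> s (sing T A s x)) (\<lambda>s x. x))"

definition alg_mor :: "('s,'u) mnd \<Rightarrow> ('s,'u) alg \<Rightarrow> ('s,'u) alg \<Rightarrow> ('s,'u) smap \<Rightarrow> bool" where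
  "alg_mor T Al Bl f \<longleftrightarrow>
     is_mor (fst Al) (fst Bl) f \<and>
     agree (Mobj T (fst Al)) (\<lambda>s u. f s (snd Al s u)) (\<lambda>s u. snd Bl s (Mmap T (fst Al) f s u))"

definition free :: "('s,'u) mnd \<Rightarrow> ('s \<Rightarrow> 'u set) \<Rightarrow> ('s,'u) alg" where
  "free T S = (Mobj T (disc S), flat T (disc S))"

definition recognises :: "('s,'u) alg \<Rightarrow> ('s,'u) alg \<Rightarrow> ('s,'u) smap \<Rightarrow> 's \<Rightarrow> 'u set \<Rightarrow> bool" where
  "recognises Dl Cl f \<xi> K \<longleftrightarrow> (\<exists>P. P \<subseteq> carr (fst Cl) \<xi> \<and>
      (\<forall>x\<in>P. \<forall>y\<in>carr (fst Cl) \<xi>. leq (fst Cl) \<xi> x y \<longrightarrow> y \<in> P) \<and>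
      K = {s \<in> carr (fst Dl) \<xi>. f \<xi> s \<in> P})"

definition box :: "('s,'u) mnd \<Rightarrow> 'u" where
  "box T = inr T undefined"

text \<open>Sigma + {box}, box a new symbol of sort zeta (coproduct coded via inl/inr).\<close>
definition holeobj :: "('s,'u) mnd \<Rightarrow> ('s \<Rightarrow> 'u set) \<Rightarrow> 's \<Rightarrow> ('s,'u) pos" where
  "holeobj T S \<zeta> = disc (\<lambda>s. inl T ` S s \<union> (if s = \<zeta> then {box T} else {}))"

definition ctxs :: "('s,'u) mnd \<Rightarrow> ('s \<Rightarrow> 'u set) \<Rightarrow> 's \<Rightarrow> 's \<Rightarrow> 'u set" where
  "ctxs T S \<zeta> \<xi> = Mset T (holeobj T S \<zeta>) \<xi>"

text \<open>p[t]: image of p under the algebra morphism M(Sigma+box) -> M Sigma extending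
  box |-> t, c |-> sing(c), i.e. flat o M h.\<close>
definition plug :: "('s,'u) mnd \<Rightarrow> ('s \<Rightarrow> 'u set) \<Rightarrow> 's \<Rightarrow> 's \<Rightarrow> 'u \<Rightarrow> 'u \<Rightarrow> 'u" where
  "plug T S \<zeta> \<xi> p t = flat T (disc S) \<xi>
     (Mmap T (holeobj T S \<zeta>)
        (\<lambda>s y. if s = \<zeta> \<and> y = box T then t else sing T (disc S) s (THE c. y = inl T c)) \<xi> p)"

definition ctx_pre :: "('s,'u) mnd \<Rightarrow> ('s \<Rightarrow> 'u set) \<Rightarrow> 's \<Rightarrow> 's \<Rightarrow> 'u \<Rightarrow> 'u set \<Rightarrow> 'u set" where
  "ctx_pre T S \<zeta> \<xi> p K = {t \<in> Mset T (disc S) \<zeta>. plug T S \<zeta> \<xi> p t \<in> K}"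

text \<open>Syntactic congruence of K of sort xi (as a sorted relation, argument = sort zeta).\<close>
definition synle :: "('s,'u) mnd \<Rightarrow> ('s \<Rightarrow> 'u set) \<Rightarrow> 's \<Rightarrow> 'u set \<Rightarrow> 's \<Rightarrow> 'u \<Rightarrow> 'u \<Rightarrow> bool" where
  "synle T S \<xi> K \<zeta> s t \<longleftrightarrow>
     (\<forall>p \<in> ctxs T S \<zeta> \<xi>. plug T S \<zeta> \<xi> p s \<in> K \<longrightarrow> plug T S \<zeta> \<xi> p t \<in> K)"

text \<open>The set of classes is represented by chosen representatives.\<close>
definition qrep :: "('s,'u) pos \<Rightarrow> ('s \<Rightarrow> 'u \<Rightarrow> 'u \<Rightarrow> bool) \<Rightarrow> ('s,'u) smap" where
  "qrep A sq s x = (SOME y. y \<in> carr A s \<and> sq s x y \<and> sq s y x)"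

definition quot :: "('s,'u) pos \<Rightarrow> ('s \<Rightarrow> 'u \<Rightarrow> 'u \<Rightarrow> bool) \<Rightarrow> ('s,'u) pos" where
  "quot A sq = (\<lambda>s. qrep A sq s ` carr A s, sq)"

definition cong_ord :: "('s,'u) mnd \<Rightarrow> ('s,'u) alg \<Rightarrow> ('s \<Rightarrow> 'u \<Rightarrow> 'u \<Rightarrow> bool) \<Rightarrow> bool" where
  "cong_ord T Al sq \<longleftrightarrow> (let A = fst Al; \<pi> = snd Al in
     (\<forall>s. (\<forall>x\<in>carr A s. sq s x x) \<and>
          (\<forall>x\<in>carr A s. \<forall>y\<in>carr A s. \<forall>z\<in>carr A s. sq s x y \<and> sq s y z \<longrightarrow> sq s x z) \<and>
          (\<forall>x\<in>carr A s. \<forall>y\<in>carr A s. leq A s x y \<longrightarrow> sq s x y)) \<and>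
     (\<forall>s. \<forall>u\<in>Mset T A s. \<forall>v\<in>Mset T A s.
        leq (Mobj T (quot A sq)) s (Mmap T A (qrep A sq) s u) (Mmap T A (qrep A sq) s v) \<longrightarrow>
        sq s (\<pi> s u) (\<pi> s v)))"

definition quot_alg :: "('s,'u) mnd \<Rightarrow> ('s,'u) alg \<Rightarrow> ('s \<Rightarrow> 'u \<Rightarrow> 'u \<Rightarrow> bool) \<Rightarrow> ('s,'u) alg" where
  "quot_alg T Al sq = (quot (fst Al) sq,
     \<lambda>s w. qrep (fst Al) sq s (snd Al s
        (SOME u. u \<in> Mset T (fst Al) s \<and> Mmap T (fst Al) (qrep (fst Al) sq) s u = w)))"

definition has_syn :: "('s,'u) mnd \<Rightarrow> ('s \<Rightarrow> 'u set) \<Rightarrow> 's \<Rightarrow> 'u set \<Rightarrow> bool" where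
  "has_syn T S \<xi> K \<longleftrightarrow> cong_ord T (free T S) (synle T S \<xi> K) \<and>
     (\<forall>s. finite (carr (quot (fst (free T S)) (synle T S \<xi> K)) s))"

definition Syn :: "('s,'u) mnd \<Rightarrow> ('s \<Rightarrow> 'u set) \<Rightarrow> 's \<Rightarrow> 'u set \<Rightarrow> ('s,'u) alg" where
  "Syn T S \<xi> K = quot_alg T (free T S) (synle T S \<xi> K)"

end

theory Submission
  imports Defs
begin

lemma carr_Mobj[simp]: "carr (Mobj T A) = Mset T A" by (simp add: carr_def Mobj_def)
lemma carr_quot[simp]: "carr (quot A sq) s = qrep A sq s ` carr A s" by (simp add: carr_def quot_def)
lemma leq_quot[simp]: "leq (quot A sq) = sq" by (simp add: leq_def quot_def)
lemma carr_disc[simp]: "carr (disc S) = S" by (simp add: carr_def disc_def)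
lemma leq_disc[simp]: "leq (disc S) s x y = (x = y)" by (simp add: leq_def disc_def)
lemma pos_disc: "is_pos (disc S)" unfolding is_pos_def carr_disc leq_disc by blast

lemma mo_pos: assumes a: "monad_ok T" "is_pos A" shows "is_pos (Mobj T A)"
proof -
  have F: "\<forall>A. is_pos A \<longrightarrow> is_pos (Mobj T A)" using a(1)[unfolded monad_ok_def, THEN conjunct2, THEN conjunct2, THEN conjunct2, THEN conjunct2, THEN conjunct1] .
  show ?thesis by (rule F[rule_format, OF a(2)])
qed
lemma mo_mor: assumes a: "monad_ok T" "is_pos A" "is_pos B" "is_mor A B f" shows "is_mor (Mobj T A) (Mobj T B) (Mmap T A f)"
proof -
  have F: "\<forall>A B f. is_pos A \<and> is_pos B \<and> is_mor A B f \<longrightarrow> is_mor (Mobj T A) (Mobj T B) (Mmap T A f)"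
    using a(1)[unfolded monad_ok_def, THEN conjunct2, THEN conjunct2, THEN conjunct2, THEN conjunct2, THEN conjunct2, THEN conjunct1] .
  show ?thesis by (rule F[rule_format, OF conjI[OF a(2) conjI[OF a(3) a(4)]]])
qed
lemma mo_cong: assumes a: "monad_ok T" "is_pos A" "is_pos B" "is_mor A B f" "(\<And>s x. x \<in> carr A s \<Longrightarrow> f s x = g s x)" "u \<in> Mset T A s"
  shows "Mmap T A f s u = Mmap T A g s u"
proof -
  have ag: "agree A f g" using a(5) by (simp add: agree_def)
  have F: "\<forall>A B f g. is_pos A \<and> is_pos B \<and> is_mor A B f \<and> agree A f g \<longrightarrow>
        agree (Mobj T A) (Mmap T A f) (Mmap T A g)" using a(1)[unfolded monad_ok_def, THEN conjunct2, THEN conjunct2, THEN conjunct2, THEN conjunct2, THEN conjunct2, THEN conjunct2, THEN conjunct1] .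
  have "agree (Mobj T A) (Mmap T A f) (Mmap T A g)"
    by (rule F[rule_format, OF conjI[OF a(2) conjI[OF a(3) conjI[OF a(4) ag]]]])
  then show ?thesis using a(6) unfolding agree_def carr_Mobj by simp
qed
lemma mo_comp: assumes a: "monad_ok T" "is_pos A" "is_pos B" "is_pos C" "is_mor A B f" "is_mor B C g" "u \<in> Mset T A s"
  shows "Mmap T A (\<lambda>s x. g s (f s x)) s u = Mmap T B g s (Mmap T A f s u)"
proof -
  have F: "\<forall>A B C f g. is_pos A \<and> is_pos B \<and> is_pos C \<and> is_mor A B f \<and> is_mor B C g \<longrightarrow>
        agree (Mobj T A) (Mmap T A (\<lambda>s x. g s (f s x))) (\<lambda>s u. Mmap T B g s (Mmap T A f s u))"
    using a(1)[unfolded monad_ok_def, THEN conjunct2, THEN conjunct2, THEN conjunct2, THEN conjunct2, THEN conjunct2, THEN conjunct2, THEN conjunct2, THEN conjunct2, THEN conjunct1] .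
  have "agree (Mobj T A) (Mmap T A (\<lambda>s x. g s (f s x))) (\<lambda>s u. Mmap T B g s (Mmap T A f s u))"
    by (rule F[rule_format, OF conjI[OF a(2) conjI[OF a(3) conjI[OF a(4) conjI[OF a(5) a(6)]]]]])
  then show ?thesis using a(7) unfolding agree_def carr_Mobj by simp
qed
lemma mo_sing: assumes a: "monad_ok T" "is_pos A" shows "is_mor A (Mobj T A) (sing T A)"
proof -
  have F: "\<forall>A. is_pos A \<longrightarrow> is_mor A (Mobj T A) (sing T A)" using a(1)[unfolded monad_ok_def, THEN conjunct2, THEN conjunct2, THEN conjunct2, THEN conjunct2, THEN conjunct2, THEN conjunct2, THEN conjunct2, THEN conjunct2, THEN conjunct2, THEN conjunct1] .
  show ?thesis by (rule F[rule_format, OF a(2)])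
qed
lemma mo_flat: assumes a: "monad_ok T" "is_pos A" shows "is_mor (Mobj T (Mobj T A)) (Mobj T A) (flat T A)"
proof -
  have F: "\<forall>A. is_pos A \<longrightarrow> is_mor (Mobj T (Mobj T A)) (Mobj T A) (flat T A)" using a(1)[unfolded monad_ok_def, THEN conjunct2, THEN conjunct2, THEN conjunct2, THEN conjunct2, THEN conjunct2, THEN conjunct2, THEN conjunct2, THEN conjunct2, THEN conjunct2, THEN conjunct2, THEN conjunct1] .
  show ?thesis by (rule F[rule_format, OF a(2)])
qed
lemma mo_sing_nat: assumes a: "monad_ok T" "is_pos A" "is_pos B" "is_mor A B f" "x \<in> carr A s"
  shows "Mmap T A f s (sing T A s x) = sing T B s (f s x)"
proof -
  have F: "\<forall>A B f. is_pos A \<and> is_pos B \<and> is_mor A B f \<longrightarrow>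
        agree A (\<lambda>s x. Mmap T A f s (sing T A s x)) (\<lambda>s x. sing T B s (f s x))"
    using a(1)[unfolded monad_ok_def, THEN conjunct2, THEN conjunct2, THEN conjunct2, THEN conjunct2, THEN conjunct2, THEN conjunct2, THEN conjunct2, THEN conjunct2, THEN conjunct2, THEN conjunct2, THEN conjunct2, THEN conjunct1] .
  have "agree A (\<lambda>s x. Mmap T A f s (sing T A s x)) (\<lambda>s x. sing T B s (f s x))"
    by (rule F[rule_format, OF conjI[OF a(2) conjI[OF a(3) a(4)]]])
  then show ?thesis using a(5) unfolding agree_def by simp
qed
lemma mo_flat_nat: assumes a: "monad_ok T" "is_pos A" "is_pos B" "is_mor A B f" "u \<in> Mset T (Mobj T A) s"
  shows "Mmap T A f s (flat T A s u) = flat T B s (Mmap T (Mobj T A) (Mmap T A f) s u)"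
proof -
  have F: "\<forall>A B f. is_pos A \<and> is_pos B \<and> is_mor A B f \<longrightarrow>
        agree (Mobj T (Mobj T A)) (\<lambda>s u. Mmap T A f s (flat T A s u))
              (\<lambda>s u. flat T B s (Mmap T (Mobj T A) (Mmap T A f) s u))"
    using a(1)[unfolded monad_ok_def, THEN conjunct2, THEN conjunct2, THEN conjunct2, THEN conjunct2, THEN conjunct2, THEN conjunct2, THEN conjunct2, THEN conjunct2, THEN conjunct2, THEN conjunct2, THEN conjunct2, THEN conjunct2, THEN conjunct1] .
  have "agree (Mobj T (Mobj T A)) (\<lambda>s u. Mmap T A f s (flat T A s u))
              (\<lambda>s u. flat T B s (Mmap T (Mobj T A) (Mmap T A f) s u))"
    by (rule F[rule_format, OF conjI[OF a(2) conjI[OF a(3) a(4)]]])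
  then show ?thesis using a(5) unfolding agree_def carr_Mobj by simp
qed
lemma mo_unit1: assumes a: "monad_ok T" "is_pos A" "u \<in> Mset T A s" shows "flat T A s (sing T (Mobj T A) s u) = u"
proof -
  have F: "\<forall>A. is_pos A \<longrightarrow> agree (Mobj T A) (\<lambda>s u. flat T A s (sing T (Mobj T A) s u)) (\<lambda>s u. u)"
    using a(1)[unfolded monad_ok_def, THEN conjunct2, THEN conjunct2, THEN conjunct2, THEN conjunct2, THEN conjunct2, THEN conjunct2, THEN conjunct2, THEN conjunct2, THEN conjunct2, THEN conjunct2, THEN conjunct2, THEN conjunct2, THEN conjunct2, THEN conjunct1] .
  have "agree (Mobj T A) (\<lambda>s u. flat T A s (sing T (Mobj T A) s u)) (\<lambda>s u. u)" by (rule F[rule_format, OF a(2)])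
  then show ?thesis using a(3) unfolding agree_def carr_Mobj by simp
qed
lemma mo_unit2: assumes a: "monad_ok T" "is_pos A" "u \<in> Mset T A s" shows "flat T A s (Mmap T A (sing T A) s u) = u"
proof -
  have F: "\<forall>A. is_pos A \<longrightarrow> agree (Mobj T A) (\<lambda>s u. flat T A s (Mmap T A (sing T A) s u)) (\<lambda>s u. u)"
    using a(1)[unfolded monad_ok_def, THEN conjunct2, THEN conjunct2, THEN conjunct2, THEN conjunct2, THEN conjunct2, THEN conjunct2, THEN conjunct2, THEN conjunct2, THEN conjunct2, THEN conjunct2, THEN conjunct2, THEN conjunct2, THEN conjunct2, THEN conjunct2, THEN conjunct1] .
  have "agree (Mobj T A) (\<lambda>s u. flat T A s (Mmap T A (sing T A) s u)) (\<lambda>s u. u)" by (rule F[rule_format, OF a(2)])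
  then show ?thesis using a(3) unfolding agree_def carr_Mobj by simp
qed
lemma mo_assoc: assumes a: "monad_ok T" "is_pos A" "u \<in> Mset T (Mobj T (Mobj T A)) s"
  shows "flat T A s (flat T (Mobj T A) s u) = flat T A s (Mmap T (Mobj T (Mobj T A)) (flat T A) s u)"
proof -
  have F: "\<forall>A. is_pos A \<longrightarrow> agree (Mobj T (Mobj T (Mobj T A)))
        (\<lambda>s u. flat T A s (flat T (Mobj T A) s u))
        (\<lambda>s u. flat T A s (Mmap T (Mobj T (Mobj T A)) (flat T A) s u))"
    using a(1)[unfolded monad_ok_def, THEN conjunct2, THEN conjunct2, THEN conjunct2, THEN conjunct2, THEN conjunct2, THEN conjunct2, THEN conjunct2, THEN conjunct2, THEN conjunct2, THEN conjunct2, THEN conjunct2, THEN conjunct2, THEN conjunct2, THEN conjunct2, THEN conjunct2, THEN conjunct1] .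
  have "agree (Mobj T (Mobj T (Mobj T A)))
        (\<lambda>s u. flat T A s (flat T (Mobj T A) s u))
        (\<lambda>s u. flat T A s (Mmap T (Mobj T (Mobj T A)) (flat T A) s u))" by (rule F[rule_format, OF a(2)])
  then show ?thesis using a(3) unfolding agree_def carr_Mobj by simp
qed

lemma mor_in: "is_mor A B f \<Longrightarrow> x \<in> carr A s \<Longrightarrow> f s x \<in> carr B s" by (simp add: is_mor_def)
lemma mor_comp: "is_mor A B f \<Longrightarrow> is_mor B C g \<Longrightarrow> is_mor A C (\<lambda>s x. g s (f s x))"
  unfolding is_mor_def by blast

lemma alg_morD1: "alg_mor T Al Bl f \<Longrightarrow> is_mor (fst Al) (fst Bl) f" by (simp add: alg_mor_def)
lemma alg_morD2: "alg_mor T Al Bl f \<Longrightarrow> u \<in> Mset T (fst Al) s \<Longrightarrow> f s (snd Al s u) = snd Bl s (Mmap T (fst Al) f s u)"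
  unfolding alg_mor_def agree_def carr_Mobj by blast

lemma alg_mor_comp:
  assumes mo: "monad_ok T" and pA: "is_pos (fst Al)" and pB: "is_pos (fst Bl)" and pC: "is_pos (fst Cl)"
    and f: "alg_mor T Al Bl f" and g: "alg_mor T Bl Cl g"
  shows "alg_mor T Al Cl (\<lambda>s x. g s (f s x))"
proof -
  have fm: "is_mor (fst Al) (fst Bl) f" and gm: "is_mor (fst Bl) (fst Cl) g" using f g by (auto dest: alg_morD1)
  show ?thesis unfolding alg_mor_def
  proof (intro conjI)
    show "is_mor (fst Al) (fst Cl) (\<lambda>s x. g s (f s x))" using fm gm by (rule mor_comp)
    show "agree (Mobj T (fst Al)) (\<lambda>s u. g s (f s (snd Al s u)))
     (\<lambda>s u. snd Cl s (Mmap T (fst Al) (\<lambda>s x. g s (f s x)) s u))"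
      unfolding agree_def
    proof (intro allI ballI)
      fix s u assume u0: "u \<in> carr (Mobj T (fst Al)) s"
      then have u: "u \<in> Mset T (fst Al) s" by simp
      have 1: "f s (snd Al s u) = snd Bl s (Mmap T (fst Al) f s u)" by (rule alg_morD2[OF f u])
      have Mu: "Mmap T (fst Al) f s u \<in> carr (Mobj T (fst Bl)) s"
        using mor_in[OF mo_mor[OF mo pA pB fm] u0] .
      have 2: "g s (snd Bl s (Mmap T (fst Al) f s u)) = snd Cl s (Mmap T (fst Bl) g s (Mmap T (fst Al) f s u))"
        using alg_morD2[OF g] Mu by simp
      have 3: "Mmap T (fst Al) (\<lambda>s x. g s (f s x)) s u = Mmap T (fst Bl) g s (Mmap T (fst Al) f s u)"
        by (rule mo_comp[OF mo pA pB pC fm gm u])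
      show "g s (f s (snd Al s u)) = snd Cl s (Mmap T (fst Al) (\<lambda>s x. g s (f s x)) s u)"
        using 1 2 3 by simp
    qed
  qed
qed

lemma ext_unique:
  assumes mo: "monad_ok T" and pC: "is_pos (fst Cl)" and g: "alg_mor T (free T G) Cl g"
    and u: "u \<in> Mset T (disc G) s"
  shows "g s u = snd Cl s (Mmap T (disc G) (\<lambda>s a. g s (sing T (disc G) s a)) s u)"
proof -
  let ?D = "disc G" let ?B = "Mobj T ?D"
  have pD: "is_pos ?D" by (rule pos_disc)
  have pB: "is_pos ?B" using mo pD by (rule mo_pos)
  have gm: "is_mor ?B (fst Cl) g" using alg_morD1[OF g] by (simp add: free_def)
  have sm: "is_mor ?D ?B (sing T ?D)" using mo pD by (rule mo_sing)
  have Mu: "Mmap T ?D (sing T ?D) s u \<in> Mset T ?B s"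
    using mor_in[OF mo_mor[OF mo pD pB sm]] u by simp
  have "g s u = g s (flat T ?D s (Mmap T ?D (sing T ?D) s u))" using mo_unit2[OF mo pD u] by simp
  also have "\<dots> = snd Cl s (Mmap T ?B g s (Mmap T ?D (sing T ?D) s u))"
    using alg_morD2[OF g] Mu by (simp add: free_def)
  also have "Mmap T ?B g s (Mmap T ?D (sing T ?D) s u) = Mmap T ?D (\<lambda>s a. g s (sing T ?D s a)) s u"
    using mo_comp[OF mo pD pB pC sm gm u] by simp
  finally show ?thesis .
qed

lemma pos_refl: "is_pos A \<Longrightarrow> x \<in> carr A s \<Longrightarrow> leq A s x x" unfolding is_pos_def by blast

lemma qrep_prop:
  assumes refl: "\<forall>s x. sq s x x" and x: "x \<in> carr A s"
  shows "qrep A sq s x \<in> carr A s \<and> sq s x (qrep A sq s x) \<and> sq s (qrep A sq s x) x"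
  unfolding qrep_def by (rule someI[where x=x]) (simp add: x refl)

lemma qrep_eq:
  assumes trans: "\<forall>s x y z. sq s x y \<longrightarrow> sq s y z \<longrightarrow> sq s x z"
    and "sq s x y" "sq s y x"
  shows "qrep A sq s x = qrep A sq s y"
proof -
  have "(\<lambda>z. z \<in> carr A s \<and> sq s x z \<and> sq s z x) = (\<lambda>z. z \<in> carr A s \<and> sq s y z \<and> sq s z y)"
    using assms by blast
  then show ?thesis unfolding qrep_def by simp
qed

lemma qrep_eqD:
  assumes refl: "\<forall>s x. sq s x x" and trans: "\<forall>s x y z. sq s x y \<longrightarrow> sq s y z \<longrightarrow> sq s x z"
    and x: "x \<in> carr A s" and y: "y \<in> carr A s" and e: "qrep A sq s x = qrep A sq s y"
  shows "sq s x y"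
proof -
  have "sq s x (qrep A sq s x)" using qrep_prop[where sq=sq, OF refl x] by blast
  moreover have "sq s (qrep A sq s y) y" using qrep_prop[where sq=sq, OF refl y] by blast
  ultimately show ?thesis using e trans by metis
qed

lemma qrep_idem:
  assumes refl: "\<forall>s x. sq s x x" and trans: "\<forall>s x y z. sq s x y \<longrightarrow> sq s y z \<longrightarrow> sq s x z"
    and x: "x \<in> carr A s"
  shows "qrep A sq s (qrep A sq s x) = qrep A sq s x"
  using qrep_prop[where sq=sq, OF refl x] by (intro qrep_eq[where sq=sq, OF trans]) auto

lemma quot_pos:
  assumes refl: "\<forall>s x. sq s x x" and trans: "\<forall>s x y z. sq s x y \<longrightarrow> sq s y z \<longrightarrow> sq s x z"
  shows "is_pos (quot A sq)"
  unfolding is_pos_def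
proof (intro allI conjI ballI impI)
  fix s
  show "\<And>x. leq (quot A sq) s x x" using refl by simp
  show "\<And>x y z. leq (quot A sq) s x y \<and> leq (quot A sq) s y z \<Longrightarrow> leq (quot A sq) s x z" using trans by auto
  fix x y assume x: "x \<in> carr (quot A sq) s" and y: "y \<in> carr (quot A sq) s"
    and h: "leq (quot A sq) s x y \<and> leq (quot A sq) s y x"
  obtain a where a: "a \<in> carr A s" "x = qrep A sq s a" using x by auto
  obtain b where b: "b \<in> carr A s" "y = qrep A sq s b" using y by auto
  have "qrep A sq s x = qrep A sq s y" using h by (intro qrep_eq[where sq=sq, OF trans]) auto
  then show "x = y" using a b qrep_idem[where sq=sq, OF refl trans] by metis
qed

lemma qrep_mor:
  assumes refl: "\<forall>s x. sq s x x" and trans: "\<forall>s x y z. sq s x y \<longrightarrow> sq s y z \<longrightarrow> sq s x z"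
    and le: "\<forall>s. \<forall>x\<in>carr A s. \<forall>y\<in>carr A s. leq A s x y \<longrightarrow> sq s x y"
  shows "is_mor A (quot A sq) (qrep A sq)"
  unfolding is_mor_def
proof (intro allI conjI ballI impI)
  fix s x assume x: "x \<in> carr A s"
  then show "qrep A sq s x \<in> carr (quot A sq) s" by simp
  fix y assume y: "y \<in> carr A s" and "leq A s x y"
  then have "sq s x y" using le x by blast
  then show "leq (quot A sq) s (qrep A sq s x) (qrep A sq s y)"
    using qrep_prop[where sq=sq, OF refl x] qrep_prop[where sq=sq, OF refl y] trans by simp metis
qed

lemma cong_ordD1: "cong_ord T Al sq \<Longrightarrow> \<forall>s. \<forall>x\<in>carr (fst Al) s. \<forall>y\<in>carr (fst Al) s. leq (fst Al) s x y \<longrightarrow> sq s x y"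
  unfolding cong_ord_def Let_def by blast

lemma cong_ordD2: "cong_ord T Al sq \<Longrightarrow> u \<in> Mset T (fst Al) s \<Longrightarrow> v \<in> Mset T (fst Al) s \<Longrightarrow>
   leq (Mobj T (quot (fst Al) sq)) s (Mmap T (fst Al) (qrep (fst Al) sq) s u) (Mmap T (fst Al) (qrep (fst Al) sq) s v) \<Longrightarrow>
   sq s (snd Al s u) (snd Al s v)"
  unfolding cong_ord_def Let_def by blast

lemma syn_alg_mor:
  assumes mo: "monad_ok T" and pA: "is_pos (fst Al)" and co: "cong_ord T Al sq"
    and refl: "\<forall>s x. sq s x x" and trans: "\<forall>s x y z. sq s x y \<longrightarrow> sq s y z \<longrightarrow> sq s x z"
  shows "alg_mor T Al (quot_alg T Al sq) (qrep (fst Al) sq)"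
proof -
  let ?A = "fst Al" let ?q = "qrep ?A sq" let ?Q = "quot ?A sq"
  have qm: "is_mor ?A ?Q ?q" by (rule qrep_mor[where sq=sq, OF refl trans cong_ordD1[OF co]])
  have pQ: "is_pos ?Q" by (rule quot_pos[where sq=sq, OF refl trans])
  have MQ: "is_mor (Mobj T ?A) (Mobj T ?Q) (Mmap T ?A ?q)" by (rule mo_mor[OF mo pA pQ qm])
  have pMQ: "is_pos (Mobj T ?Q)" by (rule mo_pos[OF mo pQ])
  show ?thesis unfolding alg_mor_def
  proof (intro conjI)
    show "is_mor (fst Al) (fst (quot_alg T Al sq)) ?q" using qm by (simp add: quot_alg_def)
    show "agree (Mobj T ?A) (\<lambda>s u. ?q s (snd Al s u))
        (\<lambda>s u. snd (quot_alg T Al sq) s (Mmap T ?A ?q s u))"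
      unfolding agree_def
    proof (intro allI ballI)
      fix s u assume u0: "u \<in> carr (Mobj T ?A) s"
      then have u: "u \<in> Mset T ?A s" by simp
      define u' where "u' = (SOME u'. u' \<in> Mset T ?A s \<and> Mmap T ?A ?q s u' = Mmap T ?A ?q s u)"
      have u': "u' \<in> Mset T ?A s \<and> Mmap T ?A ?q s u' = Mmap T ?A ?q s u"
        unfolding u'_def by (rule someI[where x=u]) (simp add: u)
      have inQ: "Mmap T ?A ?q s u \<in> carr (Mobj T ?Q) s" by (rule mor_in[OF MQ u0])
      have r: "leq (Mobj T ?Q) s (Mmap T ?A ?q s u) (Mmap T ?A ?q s u)" by (rule pos_refl[OF pMQ inQ])
      have s1: "sq s (snd Al s u) (snd Al s u')" using cong_ordD2[OF co u] u' r by simp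
      have s2: "sq s (snd Al s u') (snd Al s u)" using cong_ordD2[OF co _ u] u' r by simp
      have "snd (quot_alg T Al sq) s (Mmap T ?A ?q s u) = ?q s (snd Al s u')"
        by (simp add: quot_alg_def u'_def)
      also have "\<dots> = ?q s (snd Al s u)" using qrep_eq[where sq=sq, OF trans s2 s1] .
      finally show "?q s (snd Al s u) = snd (quot_alg T Al sq) s (Mmap T ?A ?q s u)" by simp
    qed
  qed
qed

lemma fst_free[simp]: "fst (free T S) = Mobj T (disc S)" by (simp add: free_def)
lemma snd_free[simp]: "snd (free T S) = flat T (disc S)" by (simp add: free_def)
lemma fst_Syn[simp]: "fst (Syn T S \<xi> K) = quot (Mobj T (disc S)) (synle T S \<xi> K)"
  by (simp add: Syn_def quot_alg_def)

lemma synle_refl: "\<forall>s x. synle T S \<xi> K s x x" by (simp add: synle_def)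
lemma synle_trans: "\<forall>s x y z. synle T S \<xi> K s x y \<longrightarrow> synle T S \<xi> K s y z \<longrightarrow> synle T S \<xi> K s x z"
  unfolding synle_def by blast

lemma ctx_pre_closed:
  assumes p: "p \<in> ctxs T S \<zeta> \<xi>" and t: "t \<in> ctx_pre T S \<zeta> \<xi> p K"
    and t': "t' \<in> Mset T (disc S) \<zeta>" and le: "synle T S \<xi> K \<zeta> t t'"
  shows "t' \<in> ctx_pre T S \<zeta> \<xi> p K"
  using assms unfolding ctx_pre_def synle_def by blast

theorem proposition4p9:
  fixes T :: "('s,'u) mnd" and Sig Gam :: "'s \<Rightarrow> 'u set" and \<xi> \<zeta> :: 's and K L :: "'u set"
  assumes "monad_ok T"
    and "alphabet Sig" and "alphabet Gam"
    and "K \<subseteq> Mset T (disc Sig) \<xi>"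
    and "has_syn T Sig \<xi> K"
    and "L \<subseteq> Mset T (disc Gam) \<zeta>"
  shows "(\<exists>f. alg_mor T (free T Gam) (Syn T Sig \<xi> K) f \<and>
              recognises (free T Gam) (Syn T Sig \<xi> K) f \<zeta> L)
     \<longleftrightarrow> (\<exists>\<phi> (m::nat) (n::nat \<Rightarrow> nat) (p::nat \<Rightarrow> nat \<Rightarrow> 'u).
            alg_mor T (free T Gam) (free T Sig) \<phi> \<and>
            (\<forall>i<m. \<forall>k<n i. p i k \<in> ctxs T Sig \<zeta> \<xi>) \<and>
            L = {s \<in> Mset T (disc Gam) \<zeta>.
                   \<phi> \<zeta> s \<in> (\<Union>i<m. \<Inter>k<n i. ctx_pre T Sig \<zeta> \<xi> (p i k) K)})"
proof -
  note mo = assms(1)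
  define sq where "sq = synle T Sig \<xi> K"
  define DS where "DS = disc Sig"
  define DG where "DG = disc Gam"
  define A where "A = Mobj T DS"
  define q where "q = qrep A sq"
  define Q where "Q = quot A sq"
  have refl: "\<forall>s x. sq s x x" unfolding sq_def by (rule synle_refl)
  have trans: "\<forall>s x y z. sq s x y \<longrightarrow> sq s y z \<longrightarrow> sq s x z" unfolding sq_def by (rule synle_trans)
  have co: "cong_ord T (free T Sig) sq" using assms(5) unfolding has_syn_def sq_def by blast
  have fin: "finite (carr Q \<zeta>)" using assms(5) unfolding has_syn_def sq_def Q_def A_def DS_def by simp
  have pDS: "is_pos DS" unfolding DS_def by (rule pos_disc)
  have pDG: "is_pos DG" unfolding DG_def by (rule pos_disc)
  have pA: "is_pos A" unfolding A_def using mo pDS by (rule mo_pos)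
  have pB: "is_pos (Mobj T DG)" using mo pDG by (rule mo_pos)
  have pQ: "is_pos Q" unfolding Q_def by (rule quot_pos[where sq=sq, OF refl trans])
  have fSyn: "fst (Syn T Sig \<xi> K) = Q" by (simp add: Q_def A_def DS_def sq_def)
  have SynM: "alg_mor T (free T Sig) (Syn T Sig \<xi> K) q"
    using syn_alg_mor[where sq=sq, OF mo _ co refl trans] pA
    by (simp add: Syn_def q_def A_def DS_def sq_def)
  have cA: "\<And>s. carr A s = Mset T DS s" by (simp add: A_def)
  have sqdef: "\<And>s t. sq \<zeta> s t = (\<forall>p\<in>ctxs T Sig \<zeta> \<xi>. plug T Sig \<zeta> \<xi> p s \<in> K \<longrightarrow> plug T Sig \<zeta> \<xi> p t \<in> K)"
    by (simp add: sq_def synle_def)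
  have qp: "\<And>s x. x \<in> carr A s \<Longrightarrow> q s x \<in> carr A s \<and> sq s x (q s x) \<and> sq s (q s x) x"
    unfolding q_def by (rule qrep_prop[where sq=sq, OF refl])
  have qD: "\<And>s x y. x \<in> carr A s \<Longrightarrow> y \<in> carr A s \<Longrightarrow> q s x = q s y \<Longrightarrow> sq s x y"
    unfolding q_def by (rule qrep_eqD[where sq=sq, OF refl trans])
  have cQ: "\<And>s. carr Q s = q s ` carr A s" by (simp add: Q_def q_def)
  have lQ: "leq Q = sq" by (simp add: Q_def)
  have closed: "\<And>p t t'. p \<in> ctxs T Sig \<zeta> \<xi> \<Longrightarrow> t \<in> ctx_pre T Sig \<zeta> \<xi> p K \<Longrightarrow> t' \<in> carr A \<zeta> \<Longrightarrow> sq \<zeta> t t'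
      \<Longrightarrow> t' \<in> ctx_pre T Sig \<zeta> \<xi> p K"
    unfolding sq_def cA DS_def by (rule ctx_pre_closed)
  have preA: "\<And>p. ctx_pre T Sig \<zeta> \<xi> p K \<subseteq> carr A \<zeta>"
    unfolding ctx_pre_def cA DS_def by blast
  show ?thesis (is "?LL \<longleftrightarrow> ?RR")
  proof
    assume "?LL"
    then obtain f where fM: "alg_mor T (free T Gam) (Syn T Sig \<xi> K) f"
      and fR: "recognises (free T Gam) (Syn T Sig \<xi> K) f \<zeta> L" by blast
    obtain P where Psub: "P \<subseteq> carr Q \<zeta>" and Pup: "\<forall>x\<in>P. \<forall>y\<in>carr Q \<zeta>. leq Q \<zeta> x y \<longrightarrow> y \<in> P"
      and Ld: "L = {s \<in> carr (Mobj T DG) \<zeta>. f \<zeta> s \<in> P}"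
      using fR unfolding recognises_def fSyn fst_free DG_def by blast
    have fm: "is_mor (Mobj T DG) Q f" using alg_morD1[OF fM] fSyn by (simp add: DG_def)
    have sm: "is_mor DG (Mobj T DG) (sing T DG)" by (rule mo_sing[OF mo pDG])
    define h where "h = (\<lambda>s a. SOME t. t \<in> carr A s \<and> q s t = f s (sing T DG s a))"
    have hp: "\<And>s a. a \<in> carr DG s \<Longrightarrow> h s a \<in> carr A s \<and> q s (h s a) = f s (sing T DG s a)"
    proof -
      fix s a assume a: "a \<in> carr DG s"
      have "f s (sing T DG s a) \<in> carr Q s" using mor_in[OF fm mor_in[OF sm a]] .
      then obtain t where t: "t \<in> carr A s" "f s (sing T DG s a) = q s t" unfolding cQ by (rule imageE)
      show "h s a \<in> carr A s \<and> q s (h s a) = f s (sing T DG s a)"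
        unfolding h_def by (rule someI[where x=t]) (use t in simp)
    qed
    have hm: "is_mor DG A h"
      unfolding is_mor_def
    proof (intro allI conjI ballI impI)
      fix s x assume x: "x \<in> carr DG s"
      show "h s x \<in> carr A s" using hp[OF x] by blast
      fix y assume "y \<in> carr DG s" "leq DG s x y"
      then have "y = x" by (simp add: DG_def)
      then show "leq A s (h s x) (h s y)" using pos_refl[OF pA] hp[OF x] by simp
    qed
    have pMA: "is_pos (Mobj T A)" by (rule mo_pos[OF mo pA])
    have pMB: "is_pos (Mobj T (Mobj T DG))" by (rule mo_pos[OF mo pB])
    have Mhm: "is_mor (Mobj T DG) (Mobj T A) (Mmap T DG h)" by (rule mo_mor[OF mo pDG pA hm])
    have flm: "is_mor (Mobj T A) A (flat T DS)" unfolding A_def by (rule mo_flat[OF mo pDS])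
    define \<phi> where "\<phi> = (\<lambda>s x. flat T DS s (Mmap T DG h s x))"
    have phm: "is_mor (Mobj T DG) A \<phi>" unfolding \<phi>_def by (rule mor_comp[OF Mhm flm])
    have phM: "alg_mor T (free T Gam) (free T Sig) \<phi>"
      unfolding alg_mor_def
    proof (intro conjI)
      show "is_mor (fst (free T Gam)) (fst (free T Sig)) \<phi>" using phm by (simp add: DG_def A_def DS_def)
      show "agree (Mobj T (fst (free T Gam))) (\<lambda>s u. \<phi> s (snd (free T Gam) s u))
        (\<lambda>s u. snd (free T Sig) s (Mmap T (fst (free T Gam)) \<phi> s u))"
        unfolding agree_def fst_free snd_free DG_def[symmetric] DS_def[symmetric]
      proof (intro allI ballI)
        fix s u assume u0: "u \<in> carr (Mobj T (Mobj T DG)) s"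
        then have u: "u \<in> Mset T (Mobj T DG) s" by simp
        define w where "w = Mmap T (Mobj T DG) (Mmap T DG h) s u"
        have w: "w \<in> Mset T (Mobj T A) s"
          using mor_in[OF mo_mor[OF mo pB pMA Mhm] u0] unfolding w_def by simp
        have "\<phi> s (flat T DG s u) = flat T DS s (Mmap T DG h s (flat T DG s u))" by (simp add: \<phi>_def)
        also have "\<dots> = flat T DS s (flat T A s w)"
          unfolding w_def by (simp add: mo_flat_nat[OF mo pDG pA hm u])
        also have "\<dots> = flat T DS s (Mmap T (Mobj T A) (flat T DS) s w)"
          using mo_assoc[OF mo pDS, of w s] w unfolding A_def by simp
        also have "Mmap T (Mobj T A) (flat T DS) s w = Mmap T (Mobj T DG) \<phi> s u"
          unfolding w_def \<phi>_def using mo_comp[OF mo pB pMA pA Mhm flm u] by simp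
        finally show "\<phi> s (flat T DG s u) = flat T DS s (Mmap T (Mobj T DG) \<phi> s u)" .
      qed
    qed
    have gM: "alg_mor T (free T Gam) (Syn T Sig \<xi> K) (\<lambda>s x. q s (\<phi> s x))"
      by (rule alg_mor_comp[OF mo _ _ _ phM SynM]) (use pB pA pQ fSyn in \<open>simp_all add: DG_def A_def DS_def\<close>)
    have pSyn: "is_pos (fst (Syn T Sig \<xi> K))" using pQ fSyn by simp
    have fsing: "\<And>s a. a \<in> carr DG s \<Longrightarrow> f s (sing T DG s a) = q s (\<phi> s (sing T DG s a))"
    proof -
      fix s a assume a: "a \<in> carr DG s"
      have "\<phi> s (sing T DG s a) = flat T DS s (sing T A s (h s a))"
        unfolding \<phi>_def using mo_sing_nat[OF mo pDG pA hm a] by simp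
      also have "\<dots> = h s a" using mo_unit1[OF mo pDS, of "h s a" s] hp[OF a] unfolding A_def by simp
      finally show "f s (sing T DG s a) = q s (\<phi> s (sing T DG s a))" using hp[OF a] by simp
    qed
    have fsm: "is_mor DG Q (\<lambda>s a. f s (sing T DG s a))" by (rule mor_comp[OF sm fm])
    have feq: "\<And>s u. u \<in> Mset T DG s \<Longrightarrow> f s u = q s (\<phi> s u)"
    proof -
      fix s u assume u: "u \<in> Mset T DG s"
      have "f s u = snd (Syn T Sig \<xi> K) s (Mmap T DG (\<lambda>s a. f s (sing T DG s a)) s u)"
        using ext_unique[OF mo pSyn fM, of u s] u unfolding DG_def by simp
      also have "Mmap T DG (\<lambda>s a. f s (sing T DG s a)) s u = Mmap T DG (\<lambda>s a. q s (\<phi> s (sing T DG s a))) s u"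
        by (rule mo_cong[OF mo pDG pQ fsm fsing u])
      also have "snd (Syn T Sig \<xi> K) s \<dots> = q s (\<phi> s u)"
        using ext_unique[OF mo pSyn gM, of u s] u unfolding DG_def by simp
      finally show "f s u = q s (\<phi> s u)" .
    qed
    have phin: "\<And>s x. x \<in> Mset T DG s \<Longrightarrow> \<phi> s x \<in> carr A s"
      using mor_in[OF phm] by simp
    define Fam where "Fam = (\<lambda>p. ctx_pre T Sig \<zeta> \<xi> p K) ` ctxs T Sig \<zeta> \<xi>"
    have finFam: "finite Fam"
    proof (rule inj_on_finite[where f="\<lambda>X. q \<zeta> ` X" and B="Pow (carr Q \<zeta>)"])
      show "finite (Pow (carr Q \<zeta>))" using fin by simp
      show "(\<lambda>X. q \<zeta> ` X) ` Fam \<subseteq> Pow (carr Q \<zeta>)" unfolding Fam_def cQ using preA by blast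
      show "inj_on (\<lambda>X. q \<zeta> ` X) Fam"
      proof (rule inj_onI)
        have one: "X \<subseteq> Y" if X: "X \<in> Fam" and Y: "Y \<in> Fam" and e: "q \<zeta> ` X = q \<zeta> ` Y" for X Y
        proof
          fix t assume t: "t \<in> X"
          obtain p where p: "p \<in> ctxs T Sig \<zeta> \<xi>" "Y = ctx_pre T Sig \<zeta> \<xi> p K" using Y unfolding Fam_def by blast
          have tA: "t \<in> carr A \<zeta>" using X t preA unfolding Fam_def by blast
          have "q \<zeta> t \<in> q \<zeta> ` Y" using e t by blast
          then obtain t' where t': "t' \<in> Y" "q \<zeta> t = q \<zeta> t'" by (rule imageE)
          have t'A: "t' \<in> carr A \<zeta>" using t' p preA by blast
          have "sq \<zeta> t' t" by (rule qD[OF t'A tA]) (use t' in simp)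
          then show "t \<in> Y" using closed[OF p(1) _ tA] t' p by blast
        qed
        fix X Y assume "X \<in> Fam" "Y \<in> Fam" "q \<zeta> ` X = q \<zeta> ` Y"
        then show "X = Y" using one by (metis subset_antisym)
      qed
    qed
    define Cs where "Cs = (\<lambda>c. {p \<in> ctxs T Sig \<zeta> \<xi>. plug T Sig \<zeta> \<xi> p c \<in> K})"
    define G where "G = (\<lambda>c. (\<lambda>X. SOME p. p \<in> Cs c \<and> ctx_pre T Sig \<zeta> \<xi> p K = X) ` ((\<lambda>p. ctx_pre T Sig \<zeta> \<xi> p K) ` Cs c))"
    have Gfin: "\<And>c. finite (G c)"
    proof -
      fix c
      have "(\<lambda>p. ctx_pre T Sig \<zeta> \<xi> p K) ` Cs c \<subseteq> Fam" unfolding Fam_def Cs_def by blast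
      then show "finite (G c)" unfolding G_def using finFam finite_subset by blast
    qed
    have Gsub: "\<And>c. G c \<subseteq> Cs c"
    proof
      fix c p assume "p \<in> G c"
      then obtain p0 where p0: "p0 \<in> Cs c" "p = (SOME p. p \<in> Cs c \<and> ctx_pre T Sig \<zeta> \<xi> p K = ctx_pre T Sig \<zeta> \<xi> p0 K)"
        unfolding G_def by blast
      have "p \<in> Cs c \<and> ctx_pre T Sig \<zeta> \<xi> p K = ctx_pre T Sig \<zeta> \<xi> p0 K"
        unfolding p0(2) by (rule someI[where x=p0]) (use p0 in simp)
      then show "p \<in> Cs c" by blast
    qed
    have Gcov: "\<And>c p0. p0 \<in> Cs c \<Longrightarrow> \<exists>p\<in>G c. ctx_pre T Sig \<zeta> \<xi> p K = ctx_pre T Sig \<zeta> \<xi> p0 K"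
    proof -
      fix c p0 assume p0: "p0 \<in> Cs c"
      define p where "p = (SOME p. p \<in> Cs c \<and> ctx_pre T Sig \<zeta> \<xi> p K = ctx_pre T Sig \<zeta> \<xi> p0 K)"
      have "p \<in> Cs c \<and> ctx_pre T Sig \<zeta> \<xi> p K = ctx_pre T Sig \<zeta> \<xi> p0 K"
        unfolding p_def by (rule someI[where x=p0]) (use p0 in simp)
      moreover have "p \<in> G c" unfolding G_def p_def using p0 by blast
      ultimately show "\<exists>p\<in>G c. ctx_pre T Sig \<zeta> \<xi> p K = ctx_pre T Sig \<zeta> \<xi> p0 K" by blast
    qed
    define lst where "lst = (\<lambda>c. SOME xs. set xs = G c)"
    have lst: "\<And>c. set (lst c) = G c"
    proof -
      fix c
      obtain xs where "set xs = G c" using finite_list[OF Gfin] by blast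
      then show "set (lst c) = G c" unfolding lst_def by (rule someI)
    qed
    have Pfin: "finite P" using Psub fin finite_subset by blast
    obtain cs where cs: "set cs = P" using finite_list[OF Pfin] by blast
    define m where "m = length cs"
    define n where "n = (\<lambda>i. length (lst (cs ! i)))"
    define p where "p = (\<lambda>i k. lst (cs ! i) ! k)"
    have pG: "\<And>i k. k < n i \<Longrightarrow> p i k \<in> G (cs ! i)" unfolding p_def n_def using lst nth_mem by metis
    have pc: "\<forall>i<m. \<forall>k<n i. p i k \<in> ctxs T Sig \<zeta> \<xi>"
      using pG Gsub unfolding Cs_def by blast
    have key: "\<And>i t. t \<in> carr A \<zeta> \<Longrightarrow> (\<forall>k<n i. t \<in> ctx_pre T Sig \<zeta> \<xi> (p i k) K) = sq \<zeta> (cs ! i) t"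
    proof
      fix i t assume tA: "t \<in> carr A \<zeta>"
      assume all: "\<forall>k<n i. t \<in> ctx_pre T Sig \<zeta> \<xi> (p i k) K"
      show "sq \<zeta> (cs ! i) t" unfolding sqdef
      proof (intro ballI impI)
        fix p0 assume p0: "p0 \<in> ctxs T Sig \<zeta> \<xi>" "plug T Sig \<zeta> \<xi> p0 (cs ! i) \<in> K"
        then have "p0 \<in> Cs (cs ! i)" unfolding Cs_def by blast
        then obtain p' where p': "p' \<in> G (cs ! i)" "ctx_pre T Sig \<zeta> \<xi> p' K = ctx_pre T Sig \<zeta> \<xi> p0 K"
          using Gcov by blast
        obtain k where k: "k < n i" "p i k = p'" using p'(1) unfolding p_def n_def lst[symmetric] in_set_conv_nth by blast
        have "t \<in> ctx_pre T Sig \<zeta> \<xi> p0 K" using all k p'(2) by metis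
        then show "plug T Sig \<zeta> \<xi> p0 t \<in> K" unfolding ctx_pre_def by blast
      qed
    next
      fix i t assume tA: "t \<in> carr A \<zeta>" and le: "sq \<zeta> (cs ! i) t"
      show "\<forall>k<n i. t \<in> ctx_pre T Sig \<zeta> \<xi> (p i k) K"
      proof (intro allI impI)
        fix k assume k: "k < n i"
        have "p i k \<in> Cs (cs ! i)" using pG[OF k] Gsub by blast
        then have "p i k \<in> ctxs T Sig \<zeta> \<xi>" "plug T Sig \<zeta> \<xi> (p i k) (cs ! i) \<in> K" unfolding Cs_def by auto
        then show "t \<in> ctx_pre T Sig \<zeta> \<xi> (p i k) K" using le tA unfolding sqdef ctx_pre_def cA DS_def by blast
      qed
    qed
    define U where "U = (\<Union>i<m. \<Inter>k<n i. ctx_pre T Sig \<zeta> \<xi> (p i k) K)"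
    have Uchar: "\<And>t. t \<in> carr A \<zeta> \<Longrightarrow> (t \<in> U) = (q \<zeta> t \<in> P)"
    proof
      fix t assume tA: "t \<in> carr A \<zeta>"
      assume "t \<in> U"
      then obtain i where i: "i < m" "\<forall>k<n i. t \<in> ctx_pre T Sig \<zeta> \<xi> (p i k) K" unfolding U_def by blast
      have le: "sq \<zeta> (cs ! i) t" using key[OF tA] i(2) by blast
      have cP: "cs ! i \<in> P" using i(1) cs unfolding m_def by auto
      have "sq \<zeta> (cs ! i) (q \<zeta> t)" using le qp[OF tA] trans by blast
      moreover have "q \<zeta> t \<in> carr Q \<zeta>" unfolding cQ using tA by blast
      ultimately show "q \<zeta> t \<in> P" using Pup cP lQ by blast
    next
      fix t assume tA: "t \<in> carr A \<zeta>" and qP: "q \<zeta> t \<in> P"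
      then have "q \<zeta> t \<in> set cs" using cs by simp
      then obtain i where i: "i < m" "cs ! i = q \<zeta> t" unfolding m_def in_set_conv_nth by blast
      have "sq \<zeta> (cs ! i) t" using i(2) qp[OF tA] by simp
      then have "\<forall>k<n i. t \<in> ctx_pre T Sig \<zeta> \<xi> (p i k) K" using key[OF tA] by blast
      then show "t \<in> U" using i(1) unfolding U_def by blast
    qed
    have "L = {s \<in> Mset T (disc Gam) \<zeta>. \<phi> \<zeta> s \<in> U}"
    proof (rule set_eqI)
      fix s
      show "(s \<in> L) = (s \<in> {s \<in> Mset T (disc Gam) \<zeta>. \<phi> \<zeta> s \<in> U})"
      proof (cases "s \<in> Mset T DG \<zeta>")
        case True
        have "(\<phi> \<zeta> s \<in> U) = (f \<zeta> s \<in> P)" using Uchar[OF phin[OF True]] feq[OF True] by simp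
        then show ?thesis using True unfolding Ld DG_def by simp
      next
        case False
        then show ?thesis unfolding Ld DG_def by simp
      qed
    qed
    then show "?RR" using phM pc unfolding U_def by blast
  next
    assume "?RR"
    then obtain \<phi> and m :: nat and n :: "nat \<Rightarrow> nat" and p :: "nat \<Rightarrow> nat \<Rightarrow> 'u" where phM: "alg_mor T (free T Gam) (free T Sig) \<phi>"
      and pc: "\<forall>i<m. \<forall>k<n i. p i k \<in> ctxs T Sig \<zeta> \<xi>"
      and Ld: "L = {s \<in> Mset T (disc Gam) \<zeta>. \<phi> \<zeta> s \<in> (\<Union>i<m. \<Inter>k<n i. ctx_pre T Sig \<zeta> \<xi> (p i k) K)}"
      by blast
    define U where "U = (\<Union>i<m. \<Inter>k<n i. ctx_pre T Sig \<zeta> \<xi> (p i k) K)"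
    have Uc: "\<And>t t'. t \<in> U \<Longrightarrow> t' \<in> carr A \<zeta> \<Longrightarrow> sq \<zeta> t t' \<Longrightarrow> t' \<in> U"
    proof -
      fix t t' assume t: "t \<in> U" and t': "t' \<in> carr A \<zeta>" and le: "sq \<zeta> t t'"
      obtain i where i: "i < m" "\<forall>k<n i. t \<in> ctx_pre T Sig \<zeta> \<xi> (p i k) K" using t unfolding U_def by blast
      have "\<forall>k<n i. t' \<in> ctx_pre T Sig \<zeta> \<xi> (p i k) K"
      proof (intro allI impI)
        fix k assume k: "k < n i"
        show "t' \<in> ctx_pre T Sig \<zeta> \<xi> (p i k) K"
          by (rule closed[OF _ _ t' le]) (use pc i k in auto)
      qed
      then show "t' \<in> U" using i unfolding U_def by blast
    qed
    define f where "f = (\<lambda>s x. q s (\<phi> s x))"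
    have fM: "alg_mor T (free T Gam) (Syn T Sig \<xi> K) f"
      unfolding f_def
      by (rule alg_mor_comp[OF mo _ _ _ phM SynM]) (use pB pA pQ fSyn in \<open>simp_all add: DG_def A_def DS_def\<close>)
    have phin: "\<And>s x. x \<in> Mset T DG s \<Longrightarrow> \<phi> s x \<in> carr A s"
    proof -
      fix s x assume x: "x \<in> Mset T DG s"
      have "is_mor (Mobj T DG) A \<phi>" using alg_morD1[OF phM] by (simp add: DG_def A_def DS_def)
      from mor_in[OF this] x show "\<phi> s x \<in> carr A s" by simp
    qed
    define P where "P = q \<zeta> ` (U \<inter> carr A \<zeta>)"
    have "recognises (free T Gam) (Syn T Sig \<xi> K) f \<zeta> L"
      unfolding recognises_def fSyn
    proof (intro exI conjI)
      show "P \<subseteq> carr Q \<zeta>" unfolding P_def cQ by blast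
      show "\<forall>x\<in>P. \<forall>y\<in>carr Q \<zeta>. leq Q \<zeta> x y \<longrightarrow> y \<in> P"
      proof (intro ballI impI)
        fix x y assume x: "x \<in> P" and y: "y \<in> carr Q \<zeta>" and le: "leq Q \<zeta> x y"
        obtain t where t: "t \<in> U" "t \<in> carr A \<zeta>" "x = q \<zeta> t" using x P_def by blast
        obtain t' where t': "t' \<in> carr A \<zeta>" "y = q \<zeta> t'" using y cQ by blast
        have 1: "sq \<zeta> t x" using qp[OF t(2)] t(3) by simp
        have 2: "sq \<zeta> x y" using le lQ by simp
        have 3: "sq \<zeta> y t'" using qp[OF t'(1)] t'(2) by simp
        have "sq \<zeta> t t'" using trans 1 2 3 by blast
        then have "t' \<in> U" using Uc t t' by blast
        then show "y \<in> P" using t' P_def by blast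
      qed
      show "L = {s \<in> carr (fst (free T Gam)) \<zeta>. f \<zeta> s \<in> P}"
      proof -
        have "\<And>s. s \<in> Mset T DG \<zeta> \<Longrightarrow> (\<phi> \<zeta> s \<in> U) = (f \<zeta> s \<in> P)"
        proof
          fix s assume s: "s \<in> Mset T DG \<zeta>"
          have ph: "\<phi> \<zeta> s \<in> carr A \<zeta>" by (rule phin[OF s])
          show "\<phi> \<zeta> s \<in> U \<Longrightarrow> f \<zeta> s \<in> P" using ph unfolding P_def f_def by blast
          assume "f \<zeta> s \<in> P"
          then have "q \<zeta> (\<phi> \<zeta> s) \<in> q \<zeta> ` (U \<inter> carr A \<zeta>)" unfolding P_def f_def .
          then obtain t where t0: "t \<in> U \<inter> carr A \<zeta>" "q \<zeta> (\<phi> \<zeta> s) = q \<zeta> t" by (rule imageE)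
          then have t: "t \<in> U" "t \<in> carr A \<zeta>" "q \<zeta> t = q \<zeta> (\<phi> \<zeta> s)" by auto
          have "sq \<zeta> t (\<phi> \<zeta> s)" by (rule qD[OF t(2) ph t(3)])
          then show "\<phi> \<zeta> s \<in> U" using Uc t ph by blast
        qed
        then show ?thesis unfolding Ld U_def[symmetric] fst_free carr_Mobj DG_def by blast
      qed
    qed
    then show "?LL"
      using fM by blast
  qed
qed

end
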